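(* Let $A,B\in\mathfrak{J}_n$ be nonempty and let $x\in\mathbb{R}$ with $x\neq\frac12$. Let $\Omega_{A,B,x}=\{p\in\mathbb{R}^n: x\,d_S(p,A)+(1-x)\,d_S(p,B)=0\}$. Then $\mu(\Omega_{A,B,x})=0$.
   Context: $\mu$ is $n$-dimensional Lebesgue measure. $\operatorname{ci}(A)$ is the closure of the interior of $A$. $\mathfrak{J}_n$ is the family of bounded sets $A\subset\mathbb{R}^n$ with $A=\operatorname{ci}(A)$ and $\mu(\partial A)=0$. For nonempty bounded $A$, $d_S(p,A)=d(p,\partial A)$ if $p\in A$ and $d_S(p,A)=-d(p,\partial A)$ if $p\notin A$, with $d(q,E)=\min_{e\in E}\|q-e\|$. *)

theory Defs
  imports "HOL-Analysis.Analysis"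
begin

definition ci :: "'a::topological_space set \<Rightarrow> 'a set" where
  "ci A = closure (interior A)"

definition Jfam :: "'a::euclidean_space set set" where
  "Jfam = {A. bounded A \<and> A = ci A \<and> frontier A \<in> null_sets lebesgue}"

definition dS :: "'a::euclidean_space \<Rightarrow> 'a set \<Rightarrow> real" where
  "dS p A = (if p \<in> A then infdist p (frontier A) else - infdist p (frontier A))"

end

theory Submission
  imports Defs
begin

lemma null_by_translates:
  fixes E :: "'a::euclidean_space set"
  assumes cE: "compact E" and d: "\<delta> > 0"
    and avoid: "\<And>p t. p \<in> E \<Longrightarrow> 0 < t \<Longrightarrow> t \<le> \<delta> \<Longrightarrow> p + t *\<^sub>R w \<notin> E"
  shows "E \<in> null_sets lebesgue"
proof -
  obtain R where R0: "\<forall>x\<in>E. norm x \<le> R"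
    using compact_imp_bounded[OF cE] bounded_pos by blast
  hence R: "E \<subseteq> cball 0 R" by auto
  have Em: "E \<in> lmeasurable" using lmeasurable_compact[OF cE] .
  define m where "m = measure lebesgue E"
  define C where "C = measure lebesgue (cball (0::'a) (R + \<delta> * norm w))"
  have bound: "real N * m \<le> C" if N: "N \<ge> 1" for N :: nat
  proof -
    define T where "T i = (+) ((real i * \<delta> / real N) *\<^sub>R w) ` E" for i :: nat
    have Tm: "T i \<in> lmeasurable" for i unfolding T_def using measurable_translation[OF Em] .
    have disj: "disjoint_family_on T {1..N}"
    unfolding disjoint_family_on_def
    proof (intro ballI impI)
      fix i j assume i: "i \<in> {1..N}" and j: "j \<in> {1..N}" and ij: "i \<noteq> j"
      show "T i \<inter> T j = {}"
      proof (rule ccontr)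
        assume "T i \<inter> T j \<noteq> {}"
        then obtain p q where p: "p \<in> E" and q: "q \<in> E"
          and eq: "(real i * \<delta> / real N) *\<^sub>R w + p = (real j * \<delta> / real N) *\<^sub>R w + q"
          unfolding T_def by auto
        have Npos: "real N > 0" using N by simp
        show False
        proof (cases "i < j")
          case True
          let ?t = "real j * \<delta> / real N - real i * \<delta> / real N"
          have "p = q + ?t *\<^sub>R w" using eq by (simp add: algebra_simps)
          moreover have "0 < ?t" using True d Npos by (simp add: divide_strict_right_mono diff_divide_distrib[symmetric])
          moreover have "?t \<le> \<delta>"
          proof -
            have "real j * \<delta> / real N \<le> \<delta>" using j d Npos by (simp add: divide_le_eq)
            moreover have "0 \<le> real i * \<delta> / real N" using d by simp
            ultimately show ?thesis by linarith
          qed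
          ultimately show False using avoid[OF q] p by blast
        next
          case False
          hence "j < i" using ij by simp
          let ?t = "real i * \<delta> / real N - real j * \<delta> / real N"
          have "q = p + ?t *\<^sub>R w" using eq by (simp add: algebra_simps)
          moreover have "0 < ?t" using \<open>j < i\<close> d Npos by (simp add: divide_strict_right_mono diff_divide_distrib[symmetric])
          moreover have "?t \<le> \<delta>"
          proof -
            have "real i * \<delta> / real N \<le> \<delta>" using i d Npos by (simp add: divide_le_eq)
            moreover have "0 \<le> real j * \<delta> / real N" using d by simp
            ultimately show ?thesis by linarith
          qed
          ultimately show False using avoid[OF p] q by blast
        qed
      qed
    qed
    have "measure lebesgue (\<Union>i\<in>{1..N}. T i) = (\<Sum>i\<in>{1..N}. measure lebesgue (T i))"
    proof (rule measure_finite_Union)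
      show "finite {1..N}" by simp
      show "T ` {1..N} \<subseteq> sets lebesgue" using fmeasurableD[OF Tm] by blast
      show "disjoint_family_on T {1..N}" by (rule disj)
      fix i show "emeasure lebesgue (T i) \<noteq> \<infinity>" using fmeasurableD2[OF Tm] by simp
    qed
    also have "\<dots> = real N * m" unfolding T_def m_def by (simp add: measure_translation)
    finally have eq: "measure lebesgue (\<Union>i\<in>{1..N}. T i) = real N * m" .
    have sub: "(\<Union>i\<in>{1..N}. T i) \<subseteq> cball 0 (R + \<delta> * norm w)"
    proof
      fix y assume "y \<in> (\<Union>i\<in>{1..N}. T i)"
      then obtain i p where i: "i \<in> {1..N}" and p: "p \<in> E" and y: "y = (real i * \<delta> / real N) *\<^sub>R w + p"
        unfolding T_def by auto
      have "real i * \<delta> / real N \<le> \<delta>" using i d N by (simp add: divide_le_eq)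
      moreover have "0 \<le> real i * \<delta> / real N" using d by simp
      ultimately have "\<bar>real i * \<delta> / real N\<bar> * norm w \<le> \<delta> * norm w"
        by (intro mult_right_mono) auto
      hence "norm ((real i * \<delta> / real N) *\<^sub>R w) \<le> \<delta> * norm w" by (simp only: norm_scaleR)
      moreover have "norm p \<le> R" using R p by auto
      ultimately show "y \<in> cball 0 (R + \<delta> * norm w)" unfolding y
        using norm_triangle_ineq[of "(real i * \<delta> / real N) *\<^sub>R w" p] by simp
    qed
    have "measure lebesgue (\<Union>i\<in>{1..N}. T i) \<le> C"
      unfolding C_def
      by (rule measure_mono_fmeasurable[OF sub]) (use Tm in \<open>auto intro!: fmeasurableD\<close>)
    with eq show ?thesis by simp
  qed
  have m0: "m = 0"
  proof (rule ccontr)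
    assume "m \<noteq> 0"
    hence mpos: "m > 0" unfolding m_def using measure_nonneg by (metis less_eq_real_def)
    obtain N :: nat where N: "C / m < real N" using reals_Archimedean2 by blast
    have "C \<ge> 0" unfolding C_def by simp
    hence "0 \<le> C / m" using mpos by simp
    hence "real N > 0" using N by linarith
    hence "N \<ge> 1" by simp
    have "C < real N * m" using N mpos by (simp add: divide_less_eq)
    with bound[OF \<open>N \<ge> 1\<close>] show False by simp
  qed
  show ?thesis
    using Em m0 unfolding m_def
    by (simp add: null_sets_def fmeasurableD emeasure_eq_measure2)
qed


lemma seg_frontier:
  fixes A :: "'a::euclidean_space set"
  assumes "p \<in> A" "q \<notin> A"
  obtains z where "z \<in> closed_segment p q" "z \<in> frontier A"
proof -
  have "closed_segment p q \<inter> frontier A \<noteq> {}"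
    by (rule connected_Int_frontier) (use assms in auto)
  thus ?thesis using that by blast
qed

lemma dS_lip_mixed:
  fixes A :: "'a::euclidean_space set"
  assumes "p \<in> A" "q \<notin> A"
  shows "\<bar>dS p A - dS q A\<bar> \<le> dist p q"
proof -
  obtain z where z: "z \<in> closed_segment p q" "z \<in> frontier A" using seg_frontier assms by blast
  have "dist p q = dist p z + dist z q" using z(1) between between_mem_segment by blast
  moreover have "infdist p (frontier A) \<le> dist p z" "infdist q (frontier A) \<le> dist q z"
    using z(2) infdist_le by blast+
  moreover have "infdist p (frontier A) \<ge> 0" "infdist q (frontier A) \<ge> 0" by (simp_all add: infdist_nonneg)
  ultimately show ?thesis using assms unfolding dS_def by (simp add: dist_commute)
qed

lemma dS_lip:
  fixes A :: "'a::euclidean_space set"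
  shows "\<bar>dS p A - dS q A\<bar> \<le> dist p q"
proof (cases "p \<in> A \<longleftrightarrow> q \<in> A")
  case True
  thus ?thesis using infdist_triangle_abs[of p "frontier A" q] unfolding dS_def
    by (auto simp: abs_minus_commute)
next
  case False
  thus ?thesis using dS_lip_mixed[of p A q] dS_lip_mixed[of q A p]
    by (auto simp: abs_minus_commute dist_commute)
qed

lemma dS_ray:
  fixes A :: "'a::euclidean_space set"
  assumes F: "frontier A \<noteq> {}" and p: "p \<notin> frontier A"
  obtains u d where "d > 0" "norm u = 1"
    "\<And>t. 0 \<le> t \<Longrightarrow> t \<le> d \<Longrightarrow> dS (p + t *\<^sub>R u) A = dS p A - (if p \<in> A then 1 else -1) * t"
proof -
  let ?F = "frontier A"
  obtain z where z: "z \<in> ?F" "infdist p ?F = dist p z"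
    using infdist_attains_inf[OF frontier_closed F] by blast
  define d where "d = dist p z"
  have dpos: "d > 0" unfolding d_def using z p by auto
  define u where "u = (1/d) *\<^sub>R (z - p)"
  have nu: "norm u = 1" unfolding u_def d_def using dpos[unfolded d_def]
    by (simp add: dist_norm norm_minus_commute)
  have key: "dS (p + t *\<^sub>R u) A = dS p A - (if p \<in> A then 1 else -1) * t"
    if t: "0 \<le> t" "t \<le> d" for t
  proof -
    let ?y = "p + t *\<^sub>R u"
    have dpy: "dist p ?y = t" using nu t by (simp add: dist_norm)
    have zy: "z - ?y = (1 - t/d) *\<^sub>R (z - p)" unfolding u_def using dpos
      by (simp add: algebra_simps)
    have "dist ?y z = (1 - t/d) * d" unfolding dist_norm
      by (subst norm_minus_commute, subst zy) (use t dpos in \<open>simp add: d_def dist_norm norm_minus_commute\<close>)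
    hence dyz: "dist ?y z = d - t" using dpos by (simp add: algebra_simps)
    have i1: "infdist ?y ?F \<le> d - t" using infdist_le[OF z(1), of ?y] dyz by simp
    have i2: "infdist p ?F \<le> infdist ?y ?F + dist p ?y" by (rule infdist_triangle)
    have iy: "infdist ?y ?F = d - t" using i1 i2 dpy z(2) d_def by simp
    show ?thesis
    proof (cases "t < d")
      case True
      have mem: "?y \<in> A \<longleftrightarrow> p \<in> A"
      proof (rule ccontr)
        assume nm: "\<not> (?y \<in> A \<longleftrightarrow> p \<in> A)"
        obtain z' where z': "z' \<in> closed_segment p ?y" "z' \<in> ?F"
        proof (cases "p \<in> A")
          case True
          then show ?thesis using nm seg_frontier[of p A ?y] that by blast
        next
          case False
          then obtain z' where "z' \<in> closed_segment ?y p" "z' \<in> ?F"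
            using nm seg_frontier[of ?y A p] by blast
          then show ?thesis using that closed_segment_commute by blast
        qed
        have "dist p z' \<le> dist p ?y" using dist_in_closed_segment[OF z'(1)] by (simp add: dist_commute)
        hence "infdist p ?F \<le> t" using infdist_le[OF z'(2), of p] dpy by simp
        thus False using True z(2) d_def by simp
      qed
      show ?thesis unfolding dS_def using mem iy z(2) d_def by auto
    next
      case False
      hence "t = d" using t by simp
      thus ?thesis unfolding dS_def using iy z(2) d_def by auto
    qed
  qed
  show ?thesis using that[OF dpos nu key] by blast
qed



lemma dS_cont: "continuous_on UNIV (\<lambda>p. dS p (A::'a::euclidean_space set))"
proof (rule lipschitz_on_continuous_on[where L=1], rule lipschitz_onI)
  fix p q :: 'a show "dist (dS p A) (dS q A) \<le> 1 * dist p q"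
    using dS_lip[of p A q] by (simp add: dist_real_def)
qed simp

lemma aux_field: "(S::real) > 0 \<Longrightarrow> S * (t * (X / (2 * S))) = X / 2 * t"
  by (simp add: field_simps)

lemma key_point:
  fixes a b :: "'a::euclidean_space \<Rightarrow> real"
  assumes La: "\<And>p q. \<bar>a p - a q\<bar> \<le> dist p q" and Lb: "\<And>p q. \<bar>b p - b q\<bar> \<le> dist p q"
    and ab: "\<bar>\<beta>\<bar> < \<bar>\<alpha>\<bar>" and f0: "\<alpha> * a p + \<beta> * b p = 0"
    and s: "s = 1 \<or> s = -1"
    and ray: "\<And>t. 0 \<le> t \<Longrightarrow> t \<le> d \<Longrightarrow> a (p + t *\<^sub>R u) = a p - s * t"
    and w: "norm (w - u) \<le> (\<bar>\<alpha>\<bar> - \<bar>\<beta>\<bar>) / (2 * (\<bar>\<alpha>\<bar> + \<bar>\<beta>\<bar>))"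
    and nu: "norm u = 1"
  shows "\<exists>\<epsilon>\<in>{-1,1::real}. \<forall>t. 0 \<le> t \<longrightarrow> t \<le> d \<longrightarrow>
           (\<bar>\<alpha>\<bar> - \<bar>\<beta>\<bar>) / 2 * t \<le> \<epsilon> * (\<alpha> * a (p + t *\<^sub>R w) + \<beta> * b (p + t *\<^sub>R w))"
proof -
  define \<epsilon> where "\<epsilon> = - sgn \<alpha> * s"
  have apos: "\<bar>\<alpha>\<bar> > 0" using ab by linarith
  have eps: "\<epsilon> = 1 \<or> \<epsilon> = -1" using s apos unfolding \<epsilon>_def by (auto simp: sgn_if)
  have eas: "\<epsilon> * \<alpha> * s = - \<bar>\<alpha>\<bar>" using s unfolding \<epsilon>_def
    by (auto simp: sgn_if abs_if)
  have "\<forall>t. 0 \<le> t \<longrightarrow> t \<le> d \<longrightarrow>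
           (\<bar>\<alpha>\<bar> - \<bar>\<beta>\<bar>) / 2 * t \<le> \<epsilon> * (\<alpha> * a (p + t *\<^sub>R w) + \<beta> * b (p + t *\<^sub>R w))"
  proof (intro allI impI)
    fix t :: real assume t: "0 \<le> t" "t \<le> d"
    let ?y = "p + t *\<^sub>R u" and ?z = "p + t *\<^sub>R w"
    have dpy: "dist ?y p = t" using nu t by (simp add: dist_norm)
    have db: "\<bar>b ?y - b p\<bar> \<le> t" using Lb[of ?y p] dpy by simp
    have "\<epsilon> * (\<alpha> * a ?y + \<beta> * b ?y) = \<epsilon> * (\<alpha> * a p + \<beta> * b p) - \<epsilon> * \<alpha> * s * t + \<epsilon> * \<beta> * (b ?y - b p)"
      unfolding ray[OF t] by (simp add: algebra_simps)
    also have "\<dots> = \<bar>\<alpha>\<bar> * t + \<epsilon> * \<beta> * (b ?y - b p)" using f0 eas by simp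
    finally have h1: "\<epsilon> * (\<alpha> * a ?y + \<beta> * b ?y) \<ge> (\<bar>\<alpha>\<bar> - \<bar>\<beta>\<bar>) * t"
    proof -
      assume e: "\<epsilon> * (\<alpha> * a ?y + \<beta> * b ?y) = \<bar>\<alpha>\<bar> * t + \<epsilon> * \<beta> * (b ?y - b p)"
      have "\<bar>\<epsilon> * \<beta> * (b ?y - b p)\<bar> \<le> \<bar>\<beta>\<bar> * t"
        using eps db by (auto simp: abs_mult mult_left_mono)
      thus ?thesis using e by (simp add: algebra_simps)
    qed
    have dyz: "dist ?z ?y = t * norm (w - u)" using t by (simp add: dist_norm algebra_simps flip: scaleR_diff_right)
    have "\<bar>(\<alpha> * a ?z + \<beta> * b ?z) - (\<alpha> * a ?y + \<beta> * b ?y)\<bar> \<le> \<bar>\<alpha>\<bar> * \<bar>a ?z - a ?y\<bar> + \<bar>\<beta>\<bar> * \<bar>b ?z - b ?y\<bar>"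
      by (simp add: abs_mult[symmetric] algebra_simps)
    also have "\<dots> \<le> \<bar>\<alpha>\<bar> * dist ?z ?y + \<bar>\<beta>\<bar> * dist ?z ?y"
      using La[of ?z ?y] Lb[of ?z ?y] by (intro add_mono mult_left_mono) auto
    also have "\<dots> = (\<bar>\<alpha>\<bar> + \<bar>\<beta>\<bar>) * (t * norm (w - u))" using dyz by (simp add: algebra_simps)
    also have "\<dots> \<le> (\<bar>\<alpha>\<bar> + \<bar>\<beta>\<bar>) * (t * ((\<bar>\<alpha>\<bar> - \<bar>\<beta>\<bar>) / (2 * (\<bar>\<alpha>\<bar> + \<bar>\<beta>\<bar>))))"
      using w t apos by (intro mult_left_mono) auto
    also have "\<dots> = (\<bar>\<alpha>\<bar> - \<bar>\<beta>\<bar>) / 2 * t" using apos aux_field[of "\<bar>\<alpha>\<bar> + \<bar>\<beta>\<bar>" t "\<bar>\<alpha>\<bar> - \<bar>\<beta>\<bar>"] by simp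
    finally have h2: "\<bar>(\<alpha> * a ?z + \<beta> * b ?z) - (\<alpha> * a ?y + \<beta> * b ?y)\<bar> \<le> (\<bar>\<alpha>\<bar> - \<bar>\<beta>\<bar>) / 2 * t" .
    have "\<bar>\<epsilon> * (\<alpha> * a ?z + \<beta> * b ?z) - \<epsilon> * (\<alpha> * a ?y + \<beta> * b ?y)\<bar> \<le> (\<bar>\<alpha>\<bar> - \<bar>\<beta>\<bar>) / 2 * t"
      using h2 eps by (auto simp: right_diff_distrib[symmetric] abs_mult)
    thus "(\<bar>\<alpha>\<bar> - \<bar>\<beta>\<bar>) / 2 * t \<le> \<epsilon> * (\<alpha> * a ?z + \<beta> * b ?z)" using h1 by linarith
  qed
  thus ?thesis using eps by blast
qed


theorem mainTheorem3:
  fixes A B :: "'a::euclidean_space set" and x :: real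
  assumes "A \<in> Jfam" and "B \<in> Jfam" and "A \<noteq> {}" and "B \<noteq> {}"
    and "x \<noteq> 1/2"
  shows "{p. x * dS p A + (1 - x) * dS p B = 0} \<in> null_sets lebesgue"
proof -
  define f where "f p = x * dS p A + (1 - x) * dS p B" for p
  have fc: "continuous_on UNIV f" unfolding f_def
    by (intro continuous_intros dS_cont)
  have neq: "\<bar>x\<bar> \<noteq> \<bar>1 - x\<bar>" using assms(5) by (auto simp: abs_if split: if_splits)
  define c where "c = \<bar>\<bar>x\<bar> - \<bar>1 - x\<bar>\<bar> / 2"
  have cpos: "c > 0" unfolding c_def using neq by simp
  define \<eta> where "\<eta> = \<bar>\<bar>x\<bar> - \<bar>1 - x\<bar>\<bar> / (2 * (\<bar>x\<bar> + \<bar>1 - x\<bar>))"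
  have etapos: "\<eta> > 0" unfolding \<eta>_def using neq by (intro divide_pos_pos) (smt (verit))+
  obtain D :: "'a set" where D: "countable D" "\<And>X. open X \<Longrightarrow> X \<noteq> {} \<Longrightarrow> \<exists>d\<in>D. d \<in> X"
    using countable_dense_setE by blast
  define E where "E = (\<lambda>(k::nat, w::'a, \<epsilon>::real, m::nat).
     {p. f p = 0 \<and> norm p \<le> real m \<and> (\<forall>t. 0 \<le> t \<and> t \<le> 1 / real (Suc k) \<longrightarrow> c * t \<le> \<epsilon> * f (p + t *\<^sub>R w))})"
  define I where "I = (UNIV :: nat set) \<times> D \<times> {-1, 1::real} \<times> (UNIV :: nat set)"
  have FA: "frontier A \<in> null_sets lebesgue" "frontier B \<in> null_sets lebesgue"
    using assms(1,2) unfolding Jfam_def by auto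
  have FAne: "frontier A \<noteq> {}" "frontier B \<noteq> {}"
  proof -
    have "bounded A" "bounded B" using assms(1,2) unfolding Jfam_def by auto
    hence "A \<noteq> UNIV" "B \<noteq> UNIV" by auto
    thus "frontier A \<noteq> {}" "frontier B \<noteq> {}" using assms(3,4) frontier_not_empty by blast+
  qed
  have Enull: "E i \<in> null_sets lebesgue" if "i \<in> I" for i
  proof -
    obtain k w \<epsilon> m where i: "i = (k, w, \<epsilon>, m)" by (rule prod_cases4[of i]) blast
    have Ei: "E i = {p. f p = 0} \<inter> cball 0 (real m) \<inter>
        (\<Inter>t\<in>{0..1 / real (Suc k)}. {p. c * t \<le> \<epsilon> * f (p + t *\<^sub>R w)})"
      unfolding i E_def by auto
    have "closed (E i)" unfolding Ei
    proof (intro closed_Int closed_INT ballI)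
      show "closed {p. f p = 0}" by (rule closed_Collect_eq[OF fc continuous_on_const])
      show "closed (cball (0::'a) (real m))" by simp
      fix t show "closed {p. c * t \<le> \<epsilon> * f (p + t *\<^sub>R w)}"
      proof (rule closed_Collect_le)
        have "continuous_on UNIV (\<lambda>p. f (p + t *\<^sub>R w))"
          by (rule continuous_on_compose2[OF fc]) (auto intro: continuous_intros)
        thus "continuous_on UNIV (\<lambda>p. \<epsilon> * f (p + t *\<^sub>R w))" by (rule continuous_on_mult_left)
      qed (rule continuous_on_const)
    qed
    moreover have "bounded (E i)" unfolding Ei by (rule bounded_subset[of "cball 0 (real m)"]) auto
    ultimately have "compact (E i)" using compact_eq_bounded_closed by blast
    thus ?thesis
    proof (rule null_by_translates[where \<delta> = "1 / real (Suc k)" and w = w])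
      fix p t assume p: "p \<in> E i" and t: "0 < t" "t \<le> 1 / real (Suc k)"
      show "p + t *\<^sub>R w \<notin> E i"
      proof
        assume "p + t *\<^sub>R w \<in> E i"
        hence "f (p + t *\<^sub>R w) = 0" unfolding i E_def by simp
        moreover have "c * t \<le> \<epsilon> * f (p + t *\<^sub>R w)" using p t unfolding i E_def by simp
        ultimately show False using mult_pos_pos[OF cpos t(1)] by auto
      qed
    qed simp
  qed
  have cover: "{p. f p = 0} \<subseteq> frontier A \<union> frontier B \<union> (\<Union>i\<in>I. E i)"
  proof
    fix p assume p0: "p \<in> {p. f p = 0}"
    show "p \<in> frontier A \<union> frontier B \<union> (\<Union>i\<in>I. E i)"
    proof (cases "p \<in> frontier A \<or> p \<in> frontier B")
      case True then show ?thesis by blast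
    next
      case False
      hence pA: "p \<notin> frontier A" and pB: "p \<notin> frontier B" by auto
      have "\<exists>w\<in>D. \<exists>d>0. \<exists>\<epsilon>\<in>{-1,1::real}. \<forall>t. 0 \<le> t \<longrightarrow> t \<le> d \<longrightarrow> c * t \<le> \<epsilon> * f (p + t *\<^sub>R w)"
      proof (cases "\<bar>1 - x\<bar> < \<bar>x\<bar>")
        case True
        obtain u d where ud: "d > 0" "norm u = 1"
          "\<And>t. 0 \<le> t \<Longrightarrow> t \<le> d \<Longrightarrow> dS (p + t *\<^sub>R u) A = dS p A - (if p \<in> A then 1 else -1) * t"
          using dS_ray[OF FAne(1) pA] by blast
        have cc: "c = (\<bar>x\<bar> - \<bar>1 - x\<bar>) / 2" "\<eta> = (\<bar>x\<bar> - \<bar>1 - x\<bar>) / (2 * (\<bar>x\<bar> + \<bar>1 - x\<bar>))"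
          unfolding c_def \<eta>_def using True by auto
        obtain w where w: "w \<in> D" "w \<in> ball u \<eta>" using D(2)[of "ball u \<eta>"] etapos by auto
        have wn: "norm (w - u) \<le> \<eta>" using w(2) by (simp add: dist_norm norm_minus_commute)
        have "\<exists>\<epsilon>\<in>{-1,1::real}. \<forall>t. 0 \<le> t \<longrightarrow> t \<le> d \<longrightarrow> c * t \<le> \<epsilon> * f (p + t *\<^sub>R w)"
        proof -
          have f0: "x * dS p A + (1 - x) * dS p B = 0" using p0 unfolding f_def by simp
          have "\<exists>\<epsilon>\<in>{-1,1::real}. \<forall>t. 0 \<le> t \<longrightarrow> t \<le> d \<longrightarrow>
                 (\<bar>x\<bar> - \<bar>1 - x\<bar>) / 2 * t \<le> \<epsilon> * (x * dS (p + t *\<^sub>R w) A + (1 - x) * dS (p + t *\<^sub>R w) B)"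
            by (rule key_point[where a="\<lambda>p. dS p A" and b="\<lambda>p. dS p B" and \<alpha>=x and \<beta>="1 - x" and p=p
               and s="if p \<in> A then 1 else -1" and d=d and u=u and w=w,
               OF dS_lip dS_lip True f0 _ ud(3) _ ud(2)]) (use wn cc in simp_all)
          thus ?thesis unfolding f_def cc(1) .
        qed
        then show ?thesis using w(1) ud(1) by blast
      next
        case False
        hence F: "\<bar>x\<bar> < \<bar>1 - x\<bar>" using neq by linarith
        obtain u d where ud: "d > 0" "norm u = 1"
          "\<And>t. 0 \<le> t \<Longrightarrow> t \<le> d \<Longrightarrow> dS (p + t *\<^sub>R u) B = dS p B - (if p \<in> B then 1 else -1) * t"
          using dS_ray[OF FAne(2) pB] by blast
        have cc: "c = (\<bar>1 - x\<bar> - \<bar>x\<bar>) / 2" "\<eta> = (\<bar>1 - x\<bar> - \<bar>x\<bar>) / (2 * (\<bar>1 - x\<bar> + \<bar>x\<bar>))"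
          unfolding c_def \<eta>_def using F by auto
        obtain w where w: "w \<in> D" "w \<in> ball u \<eta>" using D(2)[of "ball u \<eta>"] etapos by auto
        have wn: "norm (w - u) \<le> \<eta>" using w(2) by (simp add: dist_norm norm_minus_commute)
        have "\<exists>\<epsilon>\<in>{-1,1::real}. \<forall>t. 0 \<le> t \<longrightarrow> t \<le> d \<longrightarrow> c * t \<le> \<epsilon> * f (p + t *\<^sub>R w)"
        proof -
          have f0: "(1 - x) * dS p B + x * dS p A = 0" using p0 unfolding f_def by (simp add: add.commute)
          have "\<exists>\<epsilon>\<in>{-1,1::real}. \<forall>t. 0 \<le> t \<longrightarrow> t \<le> d \<longrightarrow>
                 (\<bar>1 - x\<bar> - \<bar>x\<bar>) / 2 * t \<le> \<epsilon> * ((1 - x) * dS (p + t *\<^sub>R w) B + x * dS (p + t *\<^sub>R w) A)"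
            by (rule key_point[where a="\<lambda>p. dS p B" and b="\<lambda>p. dS p A" and \<alpha>="1 - x" and \<beta>=x and p=p
               and s="if p \<in> B then 1 else -1" and d=d and u=u and w=w,
               OF dS_lip dS_lip F f0 _ ud(3) _ ud(2)]) (use wn cc in simp_all)
          thus ?thesis unfolding f_def cc(1) by (simp only: add.commute)
        qed
        then show ?thesis using w(1) ud(1) by blast
      qed
      then obtain w d \<epsilon> where wde: "w \<in> D" "d > 0" "\<epsilon> \<in> {-1,1}"
        "\<And>t. 0 \<le> t \<Longrightarrow> t \<le> d \<Longrightarrow> c * t \<le> \<epsilon> * f (p + t *\<^sub>R w)" by blast
      obtain k :: nat where k: "inverse (real (Suc k)) < d" using reals_Archimedean wde(2) by blast
      obtain m :: nat where m: "norm p \<le> real m" using real_arch_simple by blast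
      have "\<forall>t. 0 \<le> t \<and> t \<le> 1 / real (Suc k) \<longrightarrow> c * t \<le> \<epsilon> * f (p + t *\<^sub>R w)"
      proof (intro allI impI)
        fix t assume t: "0 \<le> t \<and> t \<le> 1 / real (Suc k)"
        hence "t \<le> d" using k by (simp add: inverse_eq_divide)
        thus "c * t \<le> \<epsilon> * f (p + t *\<^sub>R w)" using wde(4) t by blast
      qed
      hence "p \<in> E (k, w, \<epsilon>, m)" unfolding E_def using p0 m by simp
      moreover have "(k, w, \<epsilon>, m) \<in> I" unfolding I_def using wde by auto
      ultimately show ?thesis by blast
    qed
  qed
  have "{p. f p = 0} \<in> sets lebesgue"
    using closed_Collect_eq[OF fc continuous_on_const, of 0]
    by (metis borel_closed sets_completionI_sets sets_lborel)
  moreover have "frontier A \<union> frontier B \<union> (\<Union>i\<in>I. E i) \<in> null_sets lebesgue"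
  proof -
    have "countable I" unfolding I_def using D(1) by auto
    hence "(\<Union>i\<in>I. E i) \<in> null_sets lebesgue" using Enull null_sets_UN' by blast
    thus ?thesis using FA by auto
  qed
  ultimately have "{p. f p = 0} \<in> null_sets lebesgue" using null_sets_subset[OF _ _ cover] by blast
  thus ?thesis unfolding f_def .
qed

end
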